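(* Let $T,L$ be positive integers and $\epsilon\in(0,1)$. For $\rho=\{\rho_t^l\}\in[0,1]^{T\times L}$ let $F(\rho)=\sum_{t,l}\rho_t^l r_t^l b_t^l(\rho_t^l)$, $G(\rho)=1-\prod_{t=1}^T\prod_{l=1}^L\rho_t^l$, $H(\rho)=\sum_{t,l}(1-\rho_t^l)$. Let $\rho^\ast$ be an optimal solution of PA1: $\min F(\rho)$ s.t. $G(\rho)\le\epsilon$, $\rho\in[0,1]^{T\times L}$. Let $\tilde\lambda,\tilde\rho$ be optimal solutions of $\max_{\lambda\ge0}\min_{\rho\in[0,1]^{T\times L}}\{F(\rho)+\lambda[H(\rho)-\epsilon]\}$. Then $$0\le F(\tilde\rho)-F(\rho^\ast)\le\tilde\lambda\min\Big\{(TL-1)\epsilon,\ \frac{TL(TL-1)}{2}\epsilon^2\Big\}.$$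
   Context: For each $t\in\{1,\dots,T\}$, $l\in\{1,\dots,L\}$: $r_t^l$ is a positive integer and $b_t^l:[0,1]\to[0,b^l_{\max}]$ is strictly increasing and convex. $\rho_t^l$ is the probability of the event of successfully recruiting $r_t^l$ participants at time $t$, location $l$, and these events are independent. PA2 denotes $\min F(\rho)$ s.t. $H(\rho)\le\epsilon$, $\rho\in[0,1]^{T\times L}$; $F(\tilde\rho)$ is its optimal value. *)

theory Defs
  imports "HOL-Analysis.Analysis"
begin

text \<open>Decision variables rho t l for t in {1..T}, l in {1..L}; values outside
  the index range are irrelevant.\<close>

definition box :: "nat \<Rightarrow> nat \<Rightarrow> (nat \<Rightarrow> nat \<Rightarrow> real) set" where
  "box T L = {\<rho>. \<forall>t\<in>{1..T}. \<forall>l\<in>{1..L}. 0 \<le> \<rho> t l \<and> \<rho> t l \<le> 1}"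

definition objF :: "(nat \<Rightarrow> nat \<Rightarrow> nat) \<Rightarrow> (nat \<Rightarrow> nat \<Rightarrow> real \<Rightarrow> real) \<Rightarrow> nat \<Rightarrow> nat
    \<Rightarrow> (nat \<Rightarrow> nat \<Rightarrow> real) \<Rightarrow> real" where
  "objF r b T L \<rho> = (\<Sum>t=1..T. \<Sum>l=1..L. \<rho> t l * real (r t l) * b t l (\<rho> t l))"

definition consG :: "nat \<Rightarrow> nat \<Rightarrow> (nat \<Rightarrow> nat \<Rightarrow> real) \<Rightarrow> real" where
  "consG T L \<rho> = 1 - (\<Prod>t=1..T. \<Prod>l=1..L. \<rho> t l)"

definition consH :: "nat \<Rightarrow> nat \<Rightarrow> (nat \<Rightarrow> nat \<Rightarrow> real) \<Rightarrow> real" where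
  "consH T L \<rho> = (\<Sum>t=1..T. \<Sum>l=1..L. 1 - \<rho> t l)"

definition PA1_optimal where
  "PA1_optimal r b T L eps \<rho>s \<longleftrightarrow>
     \<rho>s \<in> box T L \<and> consG T L \<rho>s \<le> eps \<and>
     (\<forall>\<rho>\<in>box T L. consG T L \<rho> \<le> eps \<longrightarrow> objF r b T L \<rho>s \<le> objF r b T L \<rho>)"

definition lagr where
  "lagr r b T L eps \<rho> lam = objF r b T L \<rho> + lam * (consH T L \<rho> - eps)"

definition dual_fun where
  "dual_fun r b T L eps lam = (INF \<rho>\<in>box T L. lagr r b T L eps \<rho> lam)"

definition dual_optimal where
  "dual_optimal r b T L eps lamt \<rho>t \<longleftrightarrow>
     0 \<le> lamt \<and> \<rho>t \<in> box T L \<and>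
     (\<forall>\<rho>\<in>box T L. lagr r b T L eps \<rho>t lamt \<le> lagr r b T L eps \<rho> lamt) \<and>
     (\<forall>lam\<ge>0. dual_fun r b T L eps lam \<le> dual_fun r b T L eps lamt)"

end

theory Submission imports Defs begin

lemma conv_h:
  fixes b :: "real \<Rightarrow> real"
  assumes bc: "convex_on {0..1} b" and bm: "mono_on {0..1} b" and c: "c \<ge> 0"
  shows "convex_on {0..1} (\<lambda>y. c*(y*b y) + lam*(1-y))"
proof (rule convex_onI)
  show "convex {0..1::real}" by simp
  fix t x y :: real assume t: "0 < t" "t < 1" and x: "x \<in> {0..1}" and y: "y \<in> {0..1}"
  define m where "m = (1-t)*x + t*y"
  have m0: "m \<ge> 0" using t x y by (simp add: m_def)
  have bmc: "b m \<le> (1-t) * b x + t * b y"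
    using convex_onD[OF bc, of t x y] t x y by (simp add: m_def)
  have "m * b m \<le> m * ((1-t) * b x + t * b y)" using mult_left_mono[OF bmc m0] .
  moreover have "m * ((1-t) * b x + t * b y) = (1-t)*(x*b x) + t*(y*b y) - t*(1-t)*((x-y)*(b x - b y))"
    by (simp add: m_def algebra_simps)
  moreover have "(x-y)*(b x - b y) \<ge> 0"
  proof (cases "x \<le> y")
    case True then have "b x \<le> b y" using bm x y by (auto simp: mono_on_def)
    then show ?thesis using True by (simp add: mult_nonpos_nonpos)
  next
    case False then have "b y \<le> b x" using bm x y by (auto simp: mono_on_def)
    then show ?thesis using False by simp
  qed
  moreover have "t*(1-t) \<ge> 0" using t by simp
  ultimately have "m * b m \<le> (1-t)*(x*b x) + t*(y*b y)"
    by (smt (verit) mult_nonneg_nonneg)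
  then have "c*(m*b m) \<le> c*((1-t)*(x*b x) + t*(y*b y))" using c by (rule mult_left_mono)
  then show "c * (((1 - t) *\<^sub>R x + t *\<^sub>R y) * b ((1 - t) *\<^sub>R x + t *\<^sub>R y)) + lam * (1 - ((1 - t) *\<^sub>R x + t *\<^sub>R y))
         \<le> (1 - t) * (c * (x * b x) + lam * (1 - x)) + t * (c * (y * b y) + lam * (1 - y))"
    by (simp add: m_def algebra_simps)
qed

lemma strict_h:
  fixes b :: "real \<Rightarrow> real"
  assumes bc: "convex_on {0..1} b" and bm: "strict_mono_on {0..1} b" and c: "c > 0"
    and a: "a \<in> {0..1}" and amin: "\<And>x. x \<in> {0..1} \<Longrightarrow> c*(a*b a) + lam*(1-a) \<le> c*(x*b x) + lam*(1-x)"
    and x: "x \<in> {0..1}" and xa: "x \<noteq> a"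
  shows "c*(a*b a) + lam*(1-a) < c*(x*b x) + lam*(1-x)"
proof -
  define m where "m = (1/2)*a + (1/2)*x"
  have mI: "m \<in> {0..1}" using a x by (auto simp: m_def)
  have m0: "m \<ge> 0" using a x by (simp add: m_def)
  have bmc: "b m \<le> (1/2) * b a + (1/2) * b x"
    using convex_onD[OF bc, of "1/2" a x] a x by (simp add: m_def)
  have "m * b m \<le> m * ((1/2) * b a + (1/2) * b x)" using mult_left_mono[OF bmc m0] .
  moreover have "m * ((1/2) * b a + (1/2) * b x) = (1/2)*(a*b a) + (1/2)*(x*b x) - (1/4)*((a-x)*(b a - b x))"
    by (simp add: m_def algebra_simps)
  moreover have "(a-x)*(b a - b x) > 0"
  proof (cases "a < x")
    case True then have "b a < b x" using bm x a by (auto simp: strict_mono_on_def)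
    then show ?thesis using True by (simp add: mult_neg_neg)
  next
    case False then have "x < a" using xa by simp
    then have "b x < b a" using bm x a by (auto simp: strict_mono_on_def)
    then show ?thesis using \<open>x < a\<close> by simp
  qed
  ultimately have "m * b m < (1/2)*(a*b a) + (1/2)*(x*b x)" by linarith
  then have "c*(m*b m) < c*((1/2)*(a*b a) + (1/2)*(x*b x))" using c by simp
  moreover have "c*(a*b a) + lam*(1-a) \<le> c*(m*b m) + lam*(1-m)" using amin[OF mI] .
  ultimately show ?thesis by (simp add: m_def algebra_simps)
qed

lemma oneD:
  fixes h :: "real \<Rightarrow> real"
  assumes hc: "convex_on {0..1} h" and a: "a \<in> {0..1}"
    and hs: "\<And>x. x \<in> {0..1} \<Longrightarrow> x \<noteq> a \<Longrightarrow> h a < h x" and eta: "\<eta> > 0"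
  shows "\<exists>\<delta>>0. \<forall>\<mu> x. \<bar>\<mu>\<bar> \<le> \<delta> \<longrightarrow> x \<in> {0..1} \<longrightarrow> h a - \<mu>*a - \<bar>\<mu>\<bar>*\<eta> \<le> h x - \<mu>*x"
proof -
  define c1 where "c1 = (if a+\<eta> \<le> 1 then h (a+\<eta>) - h a else 1)"
  define c2 where "c2 = (if a-\<eta> \<ge> 0 then h (a-\<eta>) - h a else 1)"
  have c1: "c1 > 0" unfolding c1_def using hs[of "a+\<eta>"] a eta by auto
  have c2: "c2 > 0" unfolding c2_def using hs[of "a-\<eta>"] a eta by auto
  define c where "c = min c1 c2"
  have cp: "c > 0" using c1 c2 by (simp add: c_def)
  show ?thesis
  proof (intro exI[of _ "c/\<eta>"] conjI allI impI)
    show "c/\<eta> > 0" using cp eta by simp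
    fix \<mu> x :: real assume mu: "\<bar>\<mu>\<bar> \<le> c/\<eta>" and x: "x \<in> {0..1}"
    have hx: "h a \<le> h x" using hs[OF x] by (cases "x = a") auto
    consider "\<bar>x - a\<bar> < \<eta>" | "x \<ge> a + \<eta>" | "x \<le> a - \<eta>" by linarith
    then show "h a - \<mu>*a - \<bar>\<mu>\<bar>*\<eta> \<le> h x - \<mu>*x"
    proof cases
      case 1
      have "\<mu>*(x-a) \<le> \<bar>\<mu>\<bar>*\<eta>"
      proof -
        have "\<mu>*(x-a) \<le> \<bar>\<mu>*(x-a)\<bar>" by simp
        also have "\<dots> = \<bar>\<mu>\<bar>*\<bar>x-a\<bar>" by (simp add: abs_mult)
        also have "\<dots> \<le> \<bar>\<mu>\<bar>*\<eta>" using 1 by (intro mult_left_mono) auto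
        finally show ?thesis .
      qed
      then show ?thesis using hx by (simp add: algebra_simps)
    next
      case 2
      define t where "t = \<eta>/(x-a)"
      have xa: "x - a > 0" using 2 eta by simp
      have t0: "0 \<le> t" "t \<le> 1" using 2 eta xa by (auto simp: t_def)
      have "t*(x-a) = \<eta>" using xa by (simp add: t_def)
      then have pt: "(1-t)*a + t*x = a+\<eta>" by (simp add: algebra_simps)
      have "a+\<eta> \<le> 1" using 2 x by simp
      have "h (a+\<eta>) \<le> (1-t) * h a + t * h x"
        using convex_onD[OF hc t0 a x] pt by simp
      then have "h (a+\<eta>) - h a \<le> t*(h x - h a)" by (simp add: algebra_simps)
      then have "c1 \<le> t*(h x - h a)" using \<open>a+\<eta> \<le> 1\<close> by (simp add: c1_def)
      then have "c \<le> t*(h x - h a)" unfolding c_def by linarith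
      then have "c*(x-a)/\<eta> \<le> h x - h a" using xa eta by (simp add: t_def field_simps)
      moreover have "\<mu>*(x-a) \<le> c*(x-a)/\<eta>"
      proof -
        have "\<mu> \<le> c/\<eta>" using mu by simp
        then have "\<mu>*(x-a) \<le> (c/\<eta>)*(x-a)" using xa by (intro mult_right_mono) auto
        then show ?thesis by simp
      qed
      ultimately have "\<mu>*(x-a) \<le> h x - h a" by linarith
      moreover have "0 \<le> \<bar>\<mu>\<bar>*\<eta>" using eta by simp
      ultimately show ?thesis by (simp add: algebra_simps)
    next
      case 3
      define t where "t = \<eta>/(a-x)"
      have xa: "a - x > 0" using 3 eta by simp
      have t0: "0 \<le> t" "t \<le> 1" using 3 eta xa by (auto simp: t_def)
      have "t*(a-x) = \<eta>" using xa by (simp add: t_def)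
      then have pt: "(1-t)*a + t*x = a-\<eta>" by (simp add: algebra_simps)
      have "a-\<eta> \<ge> 0" using 3 x by simp
      have "h (a-\<eta>) \<le> (1-t) * h a + t * h x"
        using convex_onD[OF hc t0 a x] pt by simp
      then have "h (a-\<eta>) - h a \<le> t*(h x - h a)" by (simp add: algebra_simps)
      then have "c2 \<le> t*(h x - h a)" using \<open>a-\<eta> \<ge> 0\<close> by (simp add: c2_def)
      then have "c \<le> t*(h x - h a)" unfolding c_def by linarith
      then have "c*(a-x)/\<eta> \<le> h x - h a" using xa eta by (simp add: t_def field_simps)
      moreover have "-\<mu>*(a-x) \<le> c*(a-x)/\<eta>"
      proof -
        have "-\<mu> \<le> c/\<eta>" using mu by simp
        then have "-\<mu>*(a-x) \<le> (c/\<eta>)*(a-x)" using xa by (intro mult_right_mono) auto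
        then show ?thesis by simp
      qed
      ultimately have "\<mu>*(x-a) \<le> h x - h a" by (simp add: algebra_simps)
      moreover have "0 \<le> \<bar>\<mu>\<bar>*\<eta>" using eta by simp
      ultimately show ?thesis by (simp add: algebra_simps)
    qed
  qed
qed

lemma finite_delta:
  fixes P :: "'i \<Rightarrow> real \<Rightarrow> bool"
  assumes "finite S" and "\<And>i. i \<in> S \<Longrightarrow> \<exists>\<delta>>0. \<forall>\<mu>. \<bar>\<mu>\<bar> \<le> \<delta> \<longrightarrow> P i \<mu>"
  shows "\<exists>\<delta>>0. \<forall>i\<in>S. \<forall>\<mu>. \<bar>\<mu>\<bar> \<le> \<delta> \<longrightarrow> P i \<mu>"
  using assms
proof (induction S rule: finite_induct)
  case empty then show ?case by (auto intro: exI[of _ "1::real"])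
next
  case (insert j S)
  obtain d1 where d1: "d1 > 0" "\<forall>i\<in>S. \<forall>\<mu>. \<bar>\<mu>\<bar> \<le> d1 \<longrightarrow> P i \<mu>" using insert by auto
  obtain d2 where d2: "d2 > 0" "\<forall>\<mu>. \<bar>\<mu>\<bar> \<le> d2 \<longrightarrow> P j \<mu>" using insert.prems by auto
  show ?case using d1 d2 by (intro exI[of _ "min d1 d2"]) auto
qed


definition Kf :: "(nat \<Rightarrow> nat \<Rightarrow> nat) \<Rightarrow> (nat \<Rightarrow> nat \<Rightarrow> real \<Rightarrow> real) \<Rightarrow> nat \<Rightarrow> nat \<Rightarrow> real \<Rightarrow> real \<Rightarrow> real" where
  "Kf r b t l y lam = real (r t l) * (y * b t l y) + lam * (1 - y)"

lemma lagr_S: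
  "lagr r b T L eps \<rho> lam = (\<Sum>i\<in>{1..T}\<times>{1..L}. Kf r b (fst i) (snd i) (\<rho> (fst i) (snd i)) lam) - lam*eps"
  unfolding lagr_def objF_def consH_def Kf_def
  by (simp add: sum.cartesian_product split_def sum.distrib sum_distrib_left algebra_simps sum_subtractf)

lemma consH_S: "consH T L \<rho> = (\<Sum>i\<in>{1..T}\<times>{1..L}. 1 - \<rho> (fst i) (snd i))"
  unfolding consH_def by (simp add: sum.cartesian_product split_def)

lemma consG_S: "consG T L \<rho> = 1 - (\<Prod>i\<in>{1..T}\<times>{1..L}. \<rho> (fst i) (snd i))"
  unfolding consG_def by (simp add: prod.cartesian_product split_def)

lemma W1:
  fixes y :: "'i \<Rightarrow> real"
  assumes "finite A" "\<And>i. i \<in> A \<Longrightarrow> 0 \<le> y i \<and> y i \<le> 1"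
  shows "1 - (\<Sum>i\<in>A. 1 - y i) \<le> (\<Prod>i\<in>A. y i)"
  using assms
proof (induction A rule: finite_induct)
  case empty then show ?case by simp
next
  case (insert j A)
  have IH: "1 - (\<Sum>i\<in>A. 1 - y i) \<le> (\<Prod>i\<in>A. y i)" using insert by auto
  have P1: "(\<Prod>i\<in>A. y i) \<le> 1" "0 \<le> (\<Prod>i\<in>A. y i)" using insert.prems
    by (auto intro!: prod_le_1 prod_nonneg)
  have yj: "0 \<le> y j" "y j \<le> 1" using insert.prems by auto
  have "y j * (1 - (\<Sum>i\<in>A. 1 - y i)) \<le> y j * (\<Prod>i\<in>A. y i)" using IH yj by (intro mult_left_mono) auto
  moreover have "(\<Sum>i\<in>A. 1 - y i) \<ge> 0" using insert.prems by (auto intro: sum_nonneg)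
  moreover have "y j * (\<Sum>i\<in>A. 1 - y i) \<le> (\<Sum>i\<in>A. 1 - y i)"
    using calculation(2) yj by (simp add: mult_left_le_one_le)
  ultimately have "1 - ((1 - y j) + (\<Sum>i\<in>A. 1 - y i)) \<le> y j * (\<Prod>i\<in>A. y i)"
    by (simp add: algebra_simps)
  then show ?case using insert.hyps by simp
qed

lemma W2:
  fixes y :: "'i \<Rightarrow> real"
  assumes "finite A" "\<And>i. i \<in> A \<Longrightarrow> 1 - e \<le> y i \<and> y i \<le> 1" "0 \<le> e" "e \<le> 1"
  shows "(\<Prod>i\<in>A. y i) \<le> 1 - (\<Sum>i\<in>A. 1 - y i) + real (card A) * (real (card A) - 1) / 2 * e^2"
  using assms
proof (induction A rule: finite_induct)
  case empty then show ?case by simp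
next
  case (insert j A)
  define P where "P = (\<Prod>i\<in>A. y i)"
  define S where "S = (\<Sum>i\<in>A. 1 - y i)"
  define k where "k = real (card A)"
  have IH: "P \<le> 1 - S + k*(k-1)/2*e^2" using insert by (auto simp: P_def S_def k_def)
  have yA: "0 \<le> y i \<and> y i \<le> 1" if "i \<in> A" for i
  proof -
    have "1-e \<le> y i \<and> y i \<le> 1" using insert.prems(1) that by auto
    then show ?thesis using insert.prems(3) by linarith
  qed
  have W: "1 - S \<le> P" unfolding P_def S_def by (rule W1[OF insert.hyps(1) yA])
  have S0a: "0 \<le> S" unfolding S_def using yA by (auto intro: sum_nonneg)
  have "\<And>i. i \<in> A \<Longrightarrow> 1 - y i \<le> e" using insert.prems(1) by force
  then have S0b: "S \<le> k*e" unfolding S_def k_def using sum_bounded_above[of A "\<lambda>i. 1 - y i" e] by simp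
  note S0 = S0a S0b
  have yj: "1 - e \<le> y j" "y j \<le> 1" using insert.prems by auto
  define x where "x = 1 - y j"
  have x: "0 \<le> x" "x \<le> e" using yj unfolding x_def by auto
  have "P * y j = P - x*P" by (simp add: x_def algebra_simps)
  also have "\<dots> \<le> 1 - S + k*(k-1)/2*e^2 - x*(1-S)" using IH mult_left_mono[OF W x(1)] by linarith
  also have "\<dots> = 1 - (S + x) + k*(k-1)/2*e^2 + x*S" by (simp add: algebra_simps)
  also have "\<dots> \<le> 1 - (S + x) + k*(k-1)/2*e^2 + e*(k*e)"
    using mult_mono[OF x(2) S0b insert.prems(2) S0a] by linarith
  also have "\<dots> = 1 - (S + x) + (k+1)*((k+1)-1)/2*e^2" by (simp add: field_simps power2_eq_square)
  finally have fin: "P * y j \<le> 1 - (S + x) + (k+1)*((k+1)-1)/2*e^2" .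
  have e1: "prod y (insert j A) = P * y j" using insert.hyps by (simp add: P_def mult.commute)
  have e2: "(\<Sum>i\<in>insert j A. 1 - y i) = S + x" using insert.hyps by (simp add: S_def x_def)
  have e3: "real (card (insert j A)) = k+1" using insert.hyps by (simp add: k_def)
  show ?case unfolding e1 e2 e3 by (rule fin)
qed

lemma W3:
  fixes y :: "'i \<Rightarrow> real"
  assumes "finite A" "\<And>i. i \<in> A \<Longrightarrow> 0 \<le> y i \<and> y i \<le> 1" "j \<in> A"
  shows "(\<Prod>i\<in>A. y i) \<le> y j"
proof -
  have "(\<Prod>i\<in>A. y i) = y j * (\<Prod>i\<in>A-{j}. y i)" using assms by (simp add: prod.remove)
  moreover have "(\<Prod>i\<in>A-{j}. y i) \<le> 1" using assms by (auto intro!: prod_le_1)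
  moreover have "0 \<le> y j" using assms by auto
  ultimately show ?thesis by (simp add: mult_left_le)
qed

theorem theorem3:
  fixes T L :: nat and eps :: real
    and r :: "nat \<Rightarrow> nat \<Rightarrow> nat" and b :: "nat \<Rightarrow> nat \<Rightarrow> real \<Rightarrow> real"
    and bmax :: "nat \<Rightarrow> real"
    and \<rho>s \<rho>t :: "nat \<Rightarrow> nat \<Rightarrow> real" and lamt :: real
  assumes "T \<ge> 1" and "L \<ge> 1" and "0 < eps" and "eps < 1"
    and r_pos: "\<And>t l. t \<in> {1..T} \<Longrightarrow> l \<in> {1..L} \<Longrightarrow> r t l > 0"
    and b_mono: "\<And>t l. t \<in> {1..T} \<Longrightarrow> l \<in> {1..L} \<Longrightarrow> strict_mono_on {0..1} (b t l)"
    and b_convex: "\<And>t l. t \<in> {1..T} \<Longrightarrow> l \<in> {1..L} \<Longrightarrow> convex_on {0..1} (b t l)"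
    and b_range: "\<And>t l. t \<in> {1..T} \<Longrightarrow> l \<in> {1..L} \<Longrightarrow> b t l ` {0..1} \<subseteq> {0..bmax l}"
    and opt1: "PA1_optimal r b T L eps \<rho>s"
    and optd: "dual_optimal r b T L eps lamt \<rho>t"
  shows "0 \<le> objF r b T L \<rho>t - objF r b T L \<rho>s \<and>
         objF r b T L \<rho>t - objF r b T L \<rho>s
           \<le> lamt * min ((real (T * L) - 1) * eps)
                        (real (T * L) * (real (T * L) - 1) / 2 * eps ^ 2)"
proof -
  define S where "S = {1..T}\<times>{1..L}"
  have finS: "finite S" by (simp add: S_def)
  have cardS: "card S = T*L" by (simp add: S_def card_cartesian_product)
  define n where "n = real (T*L)"
  have TL1: "(1::nat) \<le> T*L" using assms(1,2) by (metis mult_le_mono nat_mult_1)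
  have n1: "n \<ge> 1" unfolding n_def using TL1 by (metis of_nat_1 of_nat_le_iff)
  from optd have lam0: "0 \<le> lamt" and rt_box: "\<rho>t \<in> box T L"
    and rt_min: "\<And>\<rho>. \<rho> \<in> box T L \<Longrightarrow> lagr r b T L eps \<rho>t lamt \<le> lagr r b T L eps \<rho> lamt"
    and dopt: "\<And>lam. lam \<ge> 0 \<Longrightarrow> dual_fun r b T L eps lam \<le> dual_fun r b T L eps lamt"
    unfolding dual_optimal_def by auto
  from opt1 have rs_box: "\<rho>s \<in> box T L" and rs_G: "consG T L \<rho>s \<le> eps"
    and rs_min: "\<And>\<rho>. \<rho> \<in> box T L \<Longrightarrow> consG T L \<rho> \<le> eps \<Longrightarrow> objF r b T L \<rho>s \<le> objF r b T L \<rho>"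
    unfolding PA1_optimal_def by auto
  have boxD: "0 \<le> \<rho> (fst i) (snd i) \<and> \<rho> (fst i) (snd i) \<le> 1" if "\<rho> \<in> box T L" "i \<in> S" for \<rho> i
    using that unfolding box_def S_def by (auto simp: mem_Times_iff)
  define KS where "KS \<rho> lam = (\<Sum>j\<in>S. Kf r b (fst j) (snd j) (\<rho> (fst j) (snd j)) lam)" for \<rho> lam
  have lagrK: "lagr r b T L eps \<rho> lam = KS \<rho> lam - lam*eps" for \<rho> lam
    unfolding KS_def S_def by (rule lagr_S)
  define a where "a i = \<rho>t (fst i) (snd i)" for i
  have aI: "a i \<in> {0..1}" if "i \<in> S" for i using boxD[OF rt_box that] by (simp add: a_def)
  have coord: "Kf r b (fst i) (snd i) (a i) lamt \<le> Kf r b (fst i) (snd i) x lamt"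
    if i: "i \<in> S" and x: "x \<in> {0..1}" for i x
  proof -
    obtain t0 l0 where i_eq: "i = (t0,l0)" by (cases i)
    define \<rho>' where "\<rho>' = \<rho>t(t0 := (\<rho>t t0)(l0 := x))"
    have "\<rho>' \<in> box T L" using rt_box x unfolding box_def \<rho>'_def by auto
    then have le: "lagr r b T L eps \<rho>t lamt \<le> lagr r b T L eps \<rho>' lamt" by (rule rt_min)
    have eqo: "\<rho>' (fst j) (snd j) = \<rho>t (fst j) (snd j)" if "j \<in> S-{i}" for j
      using that i_eq by (cases j) (auto simp: \<rho>'_def)
    have s1: "KS \<rho>t lamt = Kf r b (fst i) (snd i) (a i) lamt + (\<Sum>j\<in>S-{i}. Kf r b (fst j) (snd j) (\<rho>t (fst j) (snd j)) lamt)"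
      unfolding KS_def using sum.remove[OF finS i] by (simp add: a_def)
    have s2: "KS \<rho>' lamt = Kf r b (fst i) (snd i) x lamt + (\<Sum>j\<in>S-{i}. Kf r b (fst j) (snd j) (\<rho>t (fst j) (snd j)) lamt)"
    proof -
      have "KS \<rho>' lamt = Kf r b (fst i) (snd i) (\<rho>' (fst i) (snd i)) lamt + (\<Sum>j\<in>S-{i}. Kf r b (fst j) (snd j) (\<rho>' (fst j) (snd j)) lamt)"
        unfolding KS_def by (rule sum.remove[OF finS i])
      also have "(\<Sum>j\<in>S-{i}. Kf r b (fst j) (snd j) (\<rho>' (fst j) (snd j)) lamt) = (\<Sum>j\<in>S-{i}. Kf r b (fst j) (snd j) (\<rho>t (fst j) (snd j)) lamt)"
        by (rule sum.cong) (simp_all add: eqo)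
      also have "\<rho>' (fst i) (snd i) = x" using i_eq by (simp add: \<rho>'_def)
      finally show ?thesis .
    qed
    show ?thesis using le s1 s2 unfolding lagrK by simp
  qed
  define h where "h i y = Kf r b (fst i) (snd i) y lamt" for i y
  have hconv: "convex_on {0..1} (h i)" if "i \<in> S" for i
  proof -
    have tl: "fst i \<in> {1..T}" "snd i \<in> {1..L}" using that by (auto simp: S_def mem_Times_iff)
    show ?thesis unfolding h_def Kf_def
      by (rule conv_h[OF b_convex[OF tl] strict_mono_on_imp_mono_on[OF b_mono[OF tl]]]) simp
  qed
  have hstrict: "h i (a i) < h i x" if "i \<in> S" "x \<in> {0..1}" "x \<noteq> a i" for i x
  proof -
    have tl: "fst i \<in> {1..T}" "snd i \<in> {1..L}" using that by (auto simp: S_def mem_Times_iff)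
    show ?thesis unfolding h_def Kf_def
      by (rule strict_h[OF b_convex[OF tl] b_mono[OF tl]])
        (use r_pos[OF tl] aI[OF that(1)] coord[OF that(1)] that in \<open>auto simp: Kf_def\<close>)
  qed
  have key: "\<exists>\<delta>>0. \<forall>\<mu>. \<bar>\<mu>\<bar> \<le> \<delta> \<longrightarrow> 0 \<le> lamt + \<mu> \<longrightarrow> \<mu> * (consH T L \<rho>t - eps) \<le> n * \<bar>\<mu>\<bar> * \<eta>"
    if eta: "\<eta> > 0" for \<eta>
  proof -
    have "\<exists>\<delta>>0. \<forall>i\<in>S. \<forall>\<mu>. \<bar>\<mu>\<bar> \<le> \<delta> \<longrightarrow> (\<forall>x. x \<in> {0..1} \<longrightarrow> h i (a i) - \<mu>*a i - \<bar>\<mu>\<bar>*\<eta> \<le> h i x - \<mu>*x)"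
    proof (rule finite_delta[OF finS])
      fix i assume i: "i \<in> S"
      show "\<exists>\<delta>>0. \<forall>\<mu>. \<bar>\<mu>\<bar> \<le> \<delta> \<longrightarrow> (\<forall>x. x \<in> {0..1} \<longrightarrow> h i (a i) - \<mu>*a i - \<bar>\<mu>\<bar>*\<eta> \<le> h i x - \<mu>*x)"
        using oneD[OF hconv[OF i] aI[OF i] hstrict[OF i] eta] by blast
    qed
    then obtain \<delta> where dpos: "\<delta> > 0" and dP: "\<And>i \<mu> x. i \<in> S \<Longrightarrow> \<bar>\<mu>\<bar> \<le> \<delta> \<Longrightarrow> x \<in> {0..1} \<Longrightarrow>
        h i (a i) - \<mu>*a i - \<bar>\<mu>\<bar>*\<eta> \<le> h i x - \<mu>*x" by blast
    show ?thesis
    proof (intro exI[of _ \<delta>] conjI allI impI dpos)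
      fix \<mu> assume mu: "\<bar>\<mu>\<bar> \<le> \<delta>" and lm: "0 \<le> lamt + \<mu>"
      have Kshift: "Kf r b t l y (lamt + \<mu>) = Kf r b t l y lamt + \<mu> - \<mu>*y" for t l y
        by (simp add: Kf_def algebra_simps)
      have lowb: "KS \<rho>t (lamt+\<mu>) - n*\<bar>\<mu>\<bar>*\<eta> \<le> KS \<rho> (lamt+\<mu>)" if rb: "\<rho> \<in> box T L" for \<rho>
      proof -
        have "KS \<rho>t (lamt+\<mu>) - n*\<bar>\<mu>\<bar>*\<eta> = (\<Sum>j\<in>S. Kf r b (fst j) (snd j) (a j) (lamt+\<mu>) - \<bar>\<mu>\<bar>*\<eta>)"
          unfolding KS_def a_def n_def using cardS by (simp add: sum_subtractf)
        also have "\<dots> \<le> KS \<rho> (lamt+\<mu>)" unfolding KS_def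
        proof (rule sum_mono)
          fix j assume j: "j \<in> S"
          have "\<rho> (fst j) (snd j) \<in> {0..1}" using boxD[OF rb j] by simp
          from dP[OF j mu this] show "Kf r b (fst j) (snd j) (a j) (lamt+\<mu>) - \<bar>\<mu>\<bar>*\<eta> \<le> Kf r b (fst j) (snd j) (\<rho> (fst j) (snd j)) (lamt+\<mu>)"
            unfolding Kshift h_def by simp
        qed
        finally show ?thesis .
      qed
      have d1: "lagr r b T L eps \<rho>t (lamt+\<mu>) - n*\<bar>\<mu>\<bar>*\<eta> \<le> dual_fun r b T L eps (lamt+\<mu>)"
        unfolding dual_fun_def
        by (rule cINF_greatest) (use rt_box lowb in \<open>auto simp: lagrK\<close>)
      have d2: "dual_fun r b T L eps lamt \<le> lagr r b T L eps \<rho>t lamt"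
        unfolding dual_fun_def
        by (rule cINF_lower[OF bdd_belowI2[of _ "lagr r b T L eps \<rho>t lamt"] rt_box]) (rule rt_min)
      have d3: "lagr r b T L eps \<rho>t (lamt+\<mu>) = lagr r b T L eps \<rho>t lamt + \<mu>*(consH T L \<rho>t - eps)"
        unfolding lagr_def by (simp add: algebra_simps)
      show "\<mu> * (consH T L \<rho>t - eps) \<le> n * \<bar>\<mu>\<bar> * \<eta>"
        using d1 d2 d3 dopt[OF lm] by linarith
    qed
  qed
  have Hle: "consH T L \<rho>t \<le> eps"
  proof (rule ccontr)
    assume "\<not> ?thesis"
    then have gap: "consH T L \<rho>t - eps > 0" by simp
    define \<eta> where "\<eta> = (consH T L \<rho>t - eps) / (2*n)"
    have eta: "\<eta> > 0" using gap n1 by (simp add: \<eta>_def)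
    obtain \<delta> where d: "\<delta> > 0" "\<And>\<mu>. \<bar>\<mu>\<bar> \<le> \<delta> \<Longrightarrow> 0 \<le> lamt + \<mu> \<Longrightarrow> \<mu> * (consH T L \<rho>t - eps) \<le> n * \<bar>\<mu>\<bar> * \<eta>"
      using key[OF eta] by blast
    have "\<delta> * (consH T L \<rho>t - eps) \<le> n * \<delta> * \<eta>" using d(2)[of \<delta>] d(1) lam0 by simp
    also have "\<dots> = \<delta> * (consH T L \<rho>t - eps) / 2" using n1 by (simp add: \<eta>_def)
    finally have "\<delta> * (consH T L \<rho>t - eps) \<le> \<delta> * (consH T L \<rho>t - eps) / 2" .
    moreover have "\<delta> * (consH T L \<rho>t - eps) > 0" using d(1) gap by simp
    ultimately show False by linarith
  qed
  have slack: "lamt * (consH T L \<rho>t - eps) = 0"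
  proof (rule ccontr)
    assume ne: "\<not> ?thesis"
    then have lp: "lamt > 0" and gap: "eps - consH T L \<rho>t > 0" using lam0 Hle by auto
    define \<eta> where "\<eta> = (eps - consH T L \<rho>t) / (2*n)"
    have eta: "\<eta> > 0" using gap n1 by (simp add: \<eta>_def)
    obtain \<delta> where d: "\<delta> > 0" "\<And>\<mu>. \<bar>\<mu>\<bar> \<le> \<delta> \<Longrightarrow> 0 \<le> lamt + \<mu> \<Longrightarrow> \<mu> * (consH T L \<rho>t - eps) \<le> n * \<bar>\<mu>\<bar> * \<eta>"
      using key[OF eta] by blast
    define m where "m = min \<delta> lamt"
    have m: "m > 0" "m \<le> \<delta>" "m \<le> lamt" using d(1) lp by (auto simp: m_def)
    have "m * (eps - consH T L \<rho>t) \<le> n * m * \<eta>" using d(2)[of "-m"] m by (simp add: algebra_simps)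
    also have "\<dots> = m * (eps - consH T L \<rho>t) / 2" using n1 by (simp add: \<eta>_def)
    finally have "m * (eps - consH T L \<rho>t) \<le> m * (eps - consH T L \<rho>t) / 2" .
    moreover have "m * (eps - consH T L \<rho>t) > 0" using m(1) gap by simp
    ultimately show False by linarith
  qed
  have GleH: "consG T L \<rho> \<le> consH T L \<rho>" if "\<rho> \<in> box T L" for \<rho>
    unfolding consG_S consH_S S_def[symmetric]
    using W1[OF finS, of "\<lambda>i. \<rho> (fst i) (snd i)"] boxD[OF that] by auto
  have part1: "objF r b T L \<rho>s \<le> objF r b T L \<rho>t"
    using rs_min[OF rt_box] GleH[OF rt_box] Hle by linarith
  have lg: "lagr r b T L eps \<rho>t lamt \<le> lagr r b T L eps \<rho>s lamt" by (rule rt_min[OF rs_box])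
  have diff: "objF r b T L \<rho>t - objF r b T L \<rho>s \<le> lamt * (consH T L \<rho>s - eps)"
  proof -
    have e: "lamt * consH T L \<rho>t = lamt * eps" using slack by (simp add: algebra_simps)
    have "objF r b T L \<rho>t + (lamt * consH T L \<rho>t - lamt*eps) \<le> objF r b T L \<rho>s + (lamt * consH T L \<rho>s - lamt*eps)"
      using lg unfolding lagr_def by (simp add: right_diff_distrib)
    then show ?thesis using e by (simp add: right_diff_distrib)
  qed
  define y where "y i = \<rho>s (fst i) (snd i)" for i
  have y01: "0 \<le> y i \<and> y i \<le> 1" if "i \<in> S" for i using boxD[OF rs_box that] by (simp add: y_def)
  have Pge: "1 - eps \<le> (\<Prod>i\<in>S. y i)" using rs_G unfolding consG_S S_def[symmetric] y_def by simp
  have yge: "1 - eps \<le> y i \<and> y i \<le> 1" if "i \<in> S" for i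
  proof -
    have "(\<Prod>i\<in>S. y i) \<le> y i" using W3[of S y i] finS y01 that by blast
    then show ?thesis using Pge y01[OF that] by linarith
  qed
  have Hs: "consH T L \<rho>s = (\<Sum>i\<in>S. 1 - y i)" unfolding consH_S S_def[symmetric] y_def by simp
  have b1: "consH T L \<rho>s - eps \<le> (n - 1) * eps"
  proof -
    have "(\<Sum>i\<in>S. 1 - y i) \<le> real (card S) * eps"
      using sum_bounded_above[of S "\<lambda>i. 1 - y i" eps] yge by force
    then show ?thesis unfolding Hs using cardS by (simp add: n_def algebra_simps)
  qed
  have b2: "consH T L \<rho>s - eps \<le> n * (n - 1) / 2 * eps^2"
  proof -
    have "(\<Prod>i\<in>S. y i) \<le> 1 - (\<Sum>i\<in>S. 1 - y i) + real (card S) * (real (card S) - 1) / 2 * eps^2"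
      by (rule W2[OF finS yge]) (use assms(3,4) in auto)
    moreover have "1 - (\<Prod>i\<in>S. y i) \<le> eps" using rs_G unfolding consG_S S_def[symmetric] y_def by simp
    ultimately show ?thesis unfolding Hs using cardS by (simp add: n_def)
  qed
  have "lamt * (consH T L \<rho>s - eps) \<le> lamt * min ((n - 1) * eps) (n * (n - 1) / 2 * eps^2)"
    using b1 b2 lam0 by (intro mult_left_mono) auto
  then show ?thesis using part1 diff by (simp add: n_def)
qed

end
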